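(* Let $S$ be a Sauer Matrix of size $4$ and let $r \in [0,1)^4$ be feasible for $S$. (i) If $S$ is of type $(0,4)$, then $r = (\tfrac12,\tfrac12,\tfrac12,\tfrac12)^\intercal$. (ii) If $S$ is of type $(1,3)$, then $r = (0,\tfrac12,\tfrac12,\tfrac12)^\intercal$. (iii) If $S$ is of type $(2,2)$, then $r = (0,0,\tfrac12,\tfrac12)^\intercal$. (iv) If $S$ is of type $(3,1)$ or $(4,0)$, then $S$ is infeasible for translations (i.e. no such $r$ exists).
   Context: A real matrix is totally $1$-submodular if every square submatrix (of every size) has determinant of absolute value at most $1$. For $r\in\mathbb{R}^k$ and a matrix $S$ with $k$ rows and columns $S_1,\dots,S_N$, $r+S$ is the matrix with columns $r+S_i$. A Sauer Matrix of size $k$ is a matrix $S\in\{-1,0,1\}^{k\times 2^k}$ such that every subset of $[k]$ is the support (set of nonzero coordinates) of exactly one column, the nonzero entries being arbitrary elements of $\{-1,1\}$. A vector $r\in[0,1)^k$ is feasible for $S$ if $r+S$ is totally $1$-submodular; $S$ is feasible for translations if some $r\in[0,1)^k$ is feasible for $S$, and infeasible for translations otherwise. $S$ is of type $(s,k-s)$ if exactly $s$ of its rows contain at least one entry equal to $1$; by convention the rows are ordered so that these are the first $s$ rows. *)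

theory Defs
  imports "Jordan_Normal_Form.Determinant" "Jordan_Normal_Form.DL_Submatrix"
begin

(* Rows are indexed 0..<k (paper: [k] = {1..k}); columns 0..<dim_col. *)

definition totally_1_submodular :: "real mat \<Rightarrow> bool" where
  "totally_1_submodular A \<longleftrightarrow>
     (\<forall>I J. I \<subseteq> {..<dim_row A} \<and> J \<subseteq> {..<dim_col A} \<and> card I = card J \<and> I \<noteq> {}
        \<longrightarrow> \<bar>det (submatrix A I J)\<bar> \<le> 1)"

definition col_support :: "real mat \<Rightarrow> nat \<Rightarrow> nat set" where
  "col_support S j = {i. i < dim_row S \<and> S $$ (i, j) \<noteq> 0}"

definition sauer_matrix :: "nat \<Rightarrow> real mat \<Rightarrow> bool" where
  "sauer_matrix k S \<longleftrightarrow>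
     S \<in> carrier_mat k (2 ^ k) \<and>
     (\<forall>i<k. \<forall>j<2 ^ k. S $$ (i, j) \<in> {-1, 0, 1}) \<and>
     (\<forall>T. T \<subseteq> {..<k} \<longrightarrow> (\<exists>!j. j < 2 ^ k \<and> col_support S j = T))"

definition translate :: "real vec \<Rightarrow> real mat \<Rightarrow> real mat" where
  "translate r S = mat (dim_row S) (dim_col S) (\<lambda>(i, j). r $ i + S $$ (i, j))"

definition feasible :: "real vec \<Rightarrow> real mat \<Rightarrow> bool" where
  "feasible r S \<longleftrightarrow> dim_vec r = dim_row S \<and>
     (\<forall>i<dim_vec r. 0 \<le> r $ i \<and> r $ i < 1) \<and>
     totally_1_submodular (translate r S)"

definition feasible_for_translations :: "real mat \<Rightarrow> bool" where
  "feasible_for_translations S \<longleftrightarrow> (\<exists>r. feasible r S)"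

(* type (s, k-s), with the convention that the rows containing a 1 are the first s rows *)
definition of_type :: "real mat \<Rightarrow> nat \<Rightarrow> bool" where
  "of_type S s \<longleftrightarrow> s \<le> dim_row S \<and>
     (\<forall>i<s. \<exists>j<dim_col S. S $$ (i, j) = 1) \<and>
     (\<forall>i. s \<le> i \<and> i < dim_row S \<longrightarrow> (\<forall>j<dim_col S. S $$ (i, j) \<noteq> 1))"

end

theory Submission
  imports Defs
begin


lemma det_mat_Suc:
  fixes f :: "nat \<times> nat \<Rightarrow> 'a::comm_ring_1"
  shows "det (mat (Suc n) (Suc n) f) = (\<Sum>j<Suc n. f (0,j) * (-1)^j *
     det (mat n n (\<lambda>(a,b). f (Suc a, if b < j then b else Suc b))))"
proof -
  have "det (mat (Suc n) (Suc n) f) = (\<Sum>j<Suc n. mat (Suc n) (Suc n) f $$ (0,j) * cofactor (mat (Suc n) (Suc n) f) 0 j)"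
    by (rule laplace_expansion_row) auto
  also have "\<dots> = (\<Sum>j<Suc n. f (0,j) * (-1)^j *
     det (mat n n (\<lambda>(a,b). f (Suc a, if b < j then b else Suc b))))"
  proof (rule sum.cong[OF refl])
    fix j assume j: "j \<in> {..<Suc n}"
    have "mat_delete (mat (Suc n) (Suc n) f) 0 j = mat n n (\<lambda>(a,b). f (Suc a, if b < j then b else Suc b))"
      by (rule eq_matI) (auto simp: mat_delete_def)
    then show "mat (Suc n) (Suc n) f $$ (0,j) * cofactor (mat (Suc n) (Suc n) f) 0 j = f (0,j) * (-1)^j *
     det (mat n n (\<lambda>(a,b). f (Suc a, if b < j then b else Suc b)))"
      using j by (simp add: cofactor_def)
  qed
  finally show ?thesis .
qed

lemma det_mat_1: "det (mat 1 1 f) = f (0,0)"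
  by (subst det_single) auto

lemma det3: "det (mat 3 3 f) = f(0,0)*(f(1,1)*f(2,2) - f(1,2)*f(2,1)) - f(0,1)*(f(1,0)*f(2,2) - f(1,2)*f(2,0)) + f(0,2)*(f(1,0)*f(2,1) - f(1,1)*(f(2,0)::'a::comm_ring_1))"
  by (simp add: numeral_3_eq_3 numeral_2_eq_2 det_mat_Suc det_mat_1[unfolded One_nat_def])

lemma det2: "det (mat 2 2 f) = f(0,0)*f(1,1) - f(0,1)*(f(1,0)::'a::comm_ring_1)"
  by (simp add: numeral_2_eq_2 det_mat_Suc det_mat_1[unfolded One_nat_def])

lemma det4: "det (mat 4 4 f) = f(0,0)*f(1,1)*f(2,2)*f(3,3) - f(0,0)*f(1,1)*f(2,3)*f(3,2) - f(0,0)*f(1,2)*f(2,1)*f(3,3) + f(0,0)*f(1,2)*f(2,3)*f(3,1) + f(0,0)*f(1,3)*f(2,1)*f(3,2) - f(0,0)*f(1,3)*f(2,2)*f(3,1) - f(0,1)*f(1,0)*f(2,2)*f(3,3) + f(0,1)*f(1,0)*f(2,3)*f(3,2) + f(0,1)*f(1,2)*f(2,0)*f(3,3) - f(0,1)*f(1,2)*f(2,3)*f(3,0) - f(0,1)*f(1,3)*f(2,0)*f(3,2) + f(0,1)*f(1,3)*f(2,2)*f(3,0) + f(0,2)*f(1,0)*f(2,1)*f(3,3) - f(0,2)*f(1,0)*f(2,3)*f(3,1) - f(0,2)*f(1,1)*f(2,0)*f(3,3) + f(0,2)*f(1,1)*f(2,3)*f(3,0) + f(0,2)*f(1,3)*f(2,0)*f(3,1)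 - f(0,2)*f(1,3)*f(2,1)*f(3,0) - f(0,3)*f(1,0)*f(2,1)*f(3,2) + f(0,3)*f(1,0)*f(2,2)*f(3,1) + f(0,3)*f(1,1)*f(2,0)*f(3,2) - f(0,3)*f(1,1)*f(2,2)*f(3,0) - f(0,3)*f(1,2)*f(2,0)*f(3,1) + (f(0,3)*f(1,2)*f(2,1)*f(3,0) :: 'a::comm_ring_1)"
proof -
  have sum4: "\<And>g::nat \<Rightarrow> 'a. (\<Sum>j<4. g j) = g 0 + g 1 + g 2 + g 3"
    by (simp add: eval_nat_numeral)
  have e: "det (mat 4 4 f) = (\<Sum>j<4. f (0,j) * (-1)^j *
     det (mat 3 3 (\<lambda>(a,b). f (Suc a, if b < j then b else Suc b))))"
    using det_mat_Suc[of 3 f] by simp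
  show ?thesis unfolding e sum4 det3
    by (simp add: eval_nat_numeral) (simp add: algebra_simps)
qed

lemma pick_bij:
  assumes "finite I"
  shows "bij_betw (pick I) {..<card I} I"
proof -
  have inj: "inj_on (pick I) {..<card I}"
  proof (rule inj_onI)
    fix x y assume x: "x \<in> {..<card I}" and y: "y \<in> {..<card I}" and e: "pick I x = pick I y"
    have m1: "pick I x < pick I y" if "x < y" by (rule pick_mono) (use y that in auto)
    have m2: "pick I y < pick I x" if "y < x" by (rule pick_mono) (use x that in auto)
    show "x = y"
    proof (rule ccontr)
      assume "x \<noteq> y"
      then have "x < y \<or> y < x" by linarith
      then show False using m1 m2 e by auto
    qed
  qed
  have sub: "pick I ` {..<card I} \<subseteq> I" using pick_in_set by auto
  have "card (pick I ` {..<card I}) = card I" using card_image[OF inj] by simp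
  then have "pick I ` {..<card I} = I" using sub assms by (simp add: card_subset_eq)
  then show ?thesis using inj by (simp add: bij_betw_def)
qed

lemma perm_from_lists:
  assumes "distinct xs" "length xs = k"
  shows "\<exists>p. p permutes {0..<k} \<and> (\<forall>a<k. pick (set xs) (p a) = xs ! a)"
proof -
  let ?I = "set xs"
  have cI: "card ?I = k" using assms distinct_card by metis
  have bp0: "bij_betw (pick ?I) {..<card ?I} ?I" by (rule pick_bij) simp
  then have bp: "bij_betw (pick ?I) {..<k} ?I" by (simp only: cI)
  have bn: "bij_betw (nth xs) {..<k} ?I" by (rule bij_betw_nth) (use assms in auto)
  define p where "p a = (if a < k then inv_into {..<k} (pick ?I) (xs ! a) else a)" for a
  have b1: "bij_betw (inv_into {..<k} (pick ?I)) ?I {..<k}" using bij_betw_inv_into[OF bp] .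
  have "bij_betw (inv_into {..<k} (pick ?I) \<circ> nth xs) {..<k} {..<k}"
    using bij_betw_trans[OF bn b1] .
  then have "bij_betw p {..<k} {..<k}"
    by (rule bij_betw_cong[THEN iffD1, rotated]) (auto simp: p_def)
  then have "p permutes {0..<k}"
    by (intro bij_imp_permutes) (auto simp: p_def atLeast0LessThan)
  moreover have "\<forall>a<k. pick ?I (p a) = xs ! a"
  proof (intro allI impI)
    fix a assume a: "a < k"
    have "xs ! a \<in> ?I" using a assms by auto
    then have "xs ! a \<in> pick ?I ` {..<k}" using bp by (simp add: bij_betw_def)
    then have "pick ?I (inv_into {..<k} (pick ?I) (xs ! a)) = xs ! a" by (rule f_inv_into_f)
    then show "pick ?I (p a) = xs ! a" using a by (simp add: p_def)
  qed
  ultimately show ?thesis by blast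
qed

lemma abs_signof: "\<bar>(of_int (sign p) :: real)\<bar> = 1"
  by (simp add: sign_def)

lemma minor_bound:
  fixes A :: "real mat"
  assumes T: "totally_1_submodular A"
    and di: "distinct is" "length is = k" "set is \<subseteq> {..<dim_row A}"
    and dj: "distinct js" "length js = k" "set js \<subseteq> {..<dim_col A}" and k: "k > 0"
  shows "\<bar>det (mat k k (\<lambda>(a,b). A $$ (is!a, js!b)))\<bar> \<le> 1"
proof -
  let ?I = "set is" and ?J = "set js"
  have cI: "card ?I = k" using di distinct_card by metis
  have cJ: "card ?J = k" using dj distinct_card by metis
  have cr: "card {i. i<dim_row A \<and> i\<in>?I} = k"
  proof -
    have "{i. i<dim_row A \<and> i\<in>?I} = ?I" using di by auto
    then show ?thesis using cI by simp
  qed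
  have cc: "card {i. i<dim_col A \<and> i\<in>?J} = k"
  proof -
    have "{i. i<dim_col A \<and> i\<in>?J} = ?J" using dj by auto
    then show ?thesis using cJ by simp
  qed
  define B where "B = submatrix A ?I ?J"
  have dr: "dim_row B = k" unfolding B_def dim_submatrix(1) by (rule cr)
  have dc: "dim_col B = k" unfolding B_def dim_submatrix(2) by (rule cc)
  have B: "B \<in> carrier_mat k k" using dr dc by (rule carrier_matI)
  have ne: "?I \<noteq> {}" using cI k by auto
  have T': "?I \<subseteq> {..<dim_row A} \<and> ?J \<subseteq> {..<dim_col A} \<and> card ?I = card ?J \<and> ?I \<noteq> {} \<longrightarrow> \<bar>det (submatrix A ?I ?J)\<bar> \<le> 1"
    using T unfolding totally_1_submodular_def by blast
  have dB: "\<bar>det B\<bar> \<le> 1" unfolding B_def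
    by (rule T'[THEN mp]) (use di(3) dj(3) cI cJ ne in simp)
  obtain p where p: "p permutes {0..<k}" "\<forall>a<k. pick ?I (p a) = is ! a"
    using perm_from_lists[OF di(1,2)] by blast
  obtain q where q: "q permutes {0..<k}" "\<forall>a<k. pick ?J (q a) = js ! a"
    using perm_from_lists[OF dj(1,2)] by blast
  have pk: "\<And>a. a < k \<Longrightarrow> p a < k" using p(1) by (simp add: permutes_in_image)
  have qk: "\<And>a. a < k \<Longrightarrow> q a < k" using q(1) by (simp add: permutes_in_image)
  have Bidx: "B$$(a,b) = A$$(pick ?I a, pick ?J b)" if ab: "a<k" "b<k" for a b
  proof -
    have a': "a < card {i. i<dim_row A \<and> i\<in>?I}" using ab(1) cr by simp
    have b': "b < card {i. i<dim_col A \<and> i\<in>?J}" using ab(2) cc by simp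
    show ?thesis unfolding B_def by (rule submatrix_index[OF a' b'])
  qed
  define C where "C = mat k k (\<lambda>(a,b). B$$(a, q b))"
  have C: "C \<in> carrier_mat k k" by (simp add: C_def)
  have M: "mat k k (\<lambda>(a,b). A $$ (is!a, js!b)) = mat k k (\<lambda>(a,b). C $$ (p a, b))"
    by (rule eq_matI) (auto simp: C_def pk qk Bidx p(2) q(2))
  have CT: "C\<^sup>T = mat k k (\<lambda>(a,b). B\<^sup>T $$ (q a, b))"
    by (rule eq_matI) (use B in \<open>auto simp: C_def qk\<close>)
  have "det C = det (C\<^sup>T)" using det_transpose[OF C] by simp
  also have "\<dots> = signof q * det (B\<^sup>T)" unfolding CT
    by (rule det_permute_rows) (use B q(1) in auto)
  also have "\<dots> = signof q * det B" using det_transpose[OF B] by simp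
  finally have dC: "det C = signof q * det B" .
  have "det (mat k k (\<lambda>(a,b). A $$ (is!a, js!b))) = signof p * det C"
    unfolding M by (rule det_permute_rows[OF C p(1)])
  then have "\<bar>det (mat k k (\<lambda>(a,b). A $$ (is!a, js!b)))\<bar> = \<bar>det B\<bar>"
    using dC by (simp add: abs_mult abs_signof)
  then show ?thesis using dB by simp
qed



definition D2 :: "(nat \<times> nat \<Rightarrow> real) \<Rightarrow> real" where
  "D2 f = f(0,0)*f(1,1) - f(0,1)*f(1,0)"
definition D3 :: "(nat \<times> nat \<Rightarrow> real) \<Rightarrow> real" where
  "D3 f = f(0,0)*(f(1,1)*f(2,2) - f(1,2)*f(2,1)) - f(0,1)*(f(1,0)*f(2,2) - f(1,2)*f(2,0)) + f(0,2)*(f(1,0)*f(2,1) - f(1,1)*f(2,0))"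
definition D4 :: "(nat \<times> nat \<Rightarrow> real) \<Rightarrow> real" where
  "D4 f = f(0,0)*f(1,1)*f(2,2)*f(3,3) - f(0,0)*f(1,1)*f(2,3)*f(3,2) - f(0,0)*f(1,2)*f(2,1)*f(3,3) + f(0,0)*f(1,2)*f(2,3)*f(3,1) + f(0,0)*f(1,3)*f(2,1)*f(3,2) - f(0,0)*f(1,3)*f(2,2)*f(3,1) - f(0,1)*f(1,0)*f(2,2)*f(3,3) + f(0,1)*f(1,0)*f(2,3)*f(3,2) + f(0,1)*f(1,2)*f(2,0)*f(3,3) - f(0,1)*f(1,2)*f(2,3)*f(3,0) - f(0,1)*f(1,3)*f(2,0)*f(3,2) + f(0,1)*f(1,3)*f(2,2)*f(3,0) + f(0,2)*f(1,0)*f(2,1)*f(3,3) - f(0,2)*f(1,0)*f(2,3)*f(3,1) - f(0,2)*f(1,1)*f(2,0)*f(3,3) + f(0,2)*f(1,1)*f(2,3)*f(3,0) + f(0,2)*f(1,3)*f(2,0)*f(3,1) - f(0,2)*f(1,3)*f(2,1)*f(3,0) - f(0,3)*f(1,0)*f(2,1)*f(3,2) + f(0,3)*f(1,0)*f(2,2)*f(3,1) + f(0,3)*f(1,1)*f(2,0)*f(3,2) - f(0,3)*f(1,1)*f(2,2)*f(3,0) - f(0,3)*f(1,2)*f(2,0)*f(3,1) + f(0,3)*f(1,2)*f(2,1)*f(3,0)"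

definition okrows :: "nat list \<Rightarrow> nat \<Rightarrow> bool" where
  "okrows xs n \<longleftrightarrow> distinct xs \<and> length xs = n \<and> set xs \<subseteq> {..<4}"
definition oksets :: "nat set list \<Rightarrow> nat \<Rightarrow> bool" where
  "oksets Ts n \<longleftrightarrow> distinct Ts \<and> length Ts = n \<and> (\<forall>T\<in>set Ts. T \<subseteq> {..<4})"

lemma sgnL1:
  fixes t p q :: real
  assumes "p = 1 \<or> p = -1" "q = 1 \<or> q = -1" "\<bar>t * (p - q)\<bar> \<le> 1" "\<bar>t * (p + q)\<bar> \<le> 1"
  shows "\<bar>t\<bar> \<le> 1/2"
  using assms by (auto simp: abs_mult)

lemma sgnL2:
  fixes t p1 q1 p2 q2 :: real
  assumes "p1 = 1 \<or> p1 = -1" "q1 = 1 \<or> q1 = -1" "p2 = 1 \<or> p2 = -1" "q2 = 1 \<or> q2 = -1"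
    "\<bar>t * (p1 - q1)\<bar> \<le> 1" "\<bar>t * (p2 - q2)\<bar> \<le> 1" "\<bar>t * (q2 * p1 + p2 * q1)\<bar> \<le> 1"
  shows "\<bar>t\<bar> \<le> 1/2"
  using assms by (auto simp: abs_mult)

lemma sgn_eq:
  fixes u v :: real
  assumes "u = 1 \<or> u = -1" "v = 1 \<or> v = -1" "\<bar>u - v\<bar> \<le> 1"
  shows "u = v"
  using assms by auto

lemma sgn_double:
  fixes u v :: real
  assumes "u = v" "v = 1 \<or> v = -1" "\<bar>u + v\<bar> \<le> 1"
  shows False
  using assms by auto

lemma sgn_mult:
  fixes u v :: real
  assumes "u = 1 \<or> u = -1" "v = 1 \<or> v = -1"
  shows "u * v = 1 \<or> u * v = -1"
  using assms by auto

lemma key0: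
  fixes E :: "nat \<Rightarrow> nat set \<Rightarrow> real" and r :: "nat \<Rightarrow> real"
  assumes M4: "\<And>xs Ts. okrows xs 4 \<Longrightarrow> oksets Ts 4 \<Longrightarrow> \<bar>D4 (\<lambda>(a,b). E (xs!a) (Ts!b))\<bar> \<le> 1"
    and V: "\<And>x T. x \<in> {i,a,b,c} \<Longrightarrow> E x T = r x - (if x \<in> T then 1 else 0)"
    and d: "distinct [i,a,b,c]" "i < 4" "a < 4" "b < 4" "c < 4"
  shows "r i = 1/2"
proof -
  have ri: "E i T = r i - (if i \<in> T then 1 else 0)" "E a T = r a - (if a \<in> T then 1 else 0)"
     "E b T = r b - (if b \<in> T then 1 else 0)" "E c T = r c - (if c \<in> T then 1 else 0)" for T using V by auto
  note dd = d[simplified]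
  have h1: "\<bar>D4 (\<lambda>(x,y). E ([i,a,b,c]!x) ([{},{a,b},{a,c},{b,c}]!y))\<bar> \<le> 1"
    by (rule M4) (use d in \<open>auto simp: okrows_def oksets_def doubleton_eq_iff\<close>)
  have e1: "D4 (\<lambda>(x,y). E ([i,a,b,c]!x) ([{},{a,b},{a,c},{b,c}]!y)) = 2 * r i"
    using dd by (simp add: D4_def ri algebra_simps)
  have h2: "\<bar>D4 (\<lambda>(x,y). E ([i,a,b,c]!x) ([{i},{i,a,b},{i,a,c},{i,b,c}]!y))\<bar> \<le> 1"
    by (rule M4) (use d in \<open>auto simp: okrows_def oksets_def doubleton_eq_iff\<close>)
  have e2: "D4 (\<lambda>(x,y). E ([i,a,b,c]!x) ([{i},{i,a,b},{i,a,c},{i,b,c}]!y)) = 2 * r i - 2"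
    using dd by (simp add: D4_def ri algebra_simps)
  show ?thesis using h1 h2 unfolding e1 e2 by linarith
qed

lemma key1:
  fixes E :: "nat \<Rightarrow> nat set \<Rightarrow> real" and r :: "nat \<Rightarrow> real"
  assumes M2: "\<And>xs Ts. okrows xs 2 \<Longrightarrow> oksets Ts 2 \<Longrightarrow> \<bar>D2 (\<lambda>(a,b). E (xs!a) (Ts!b))\<bar> \<le> 1"
    and M4: "\<And>xs Ts. okrows xs 4 \<Longrightarrow> oksets Ts 4 \<Longrightarrow> \<bar>D4 (\<lambda>(a,b). E (xs!a) (Ts!b))\<bar> \<le> 1"
    and Vz0: "\<And>T. z \<notin> T \<Longrightarrow> E z T = 0"
    and Vz1: "\<And>T. T \<subseteq> {..<4} \<Longrightarrow> z \<in> T \<Longrightarrow> E z T = 1 \<or> E z T = -1"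
    and V: "\<And>x T. x \<in> {i,a,b} \<Longrightarrow> E x T = r x - (if x \<in> T then 1 else 0)"
    and d: "distinct [z,i,a,b]" "z < 4" "i < 4" "a < 4" "b < 4"
  shows "r i = 1/2"
proof -
  have ri: "E i T = r i - (if i \<in> T then 1 else 0)" "E a T = r a - (if a \<in> T then 1 else 0)"
     "E b T = r b - (if b \<in> T then 1 else 0)" for T using V by auto
  have rz: "z \<notin> T \<Longrightarrow> E z T = 0" for T using Vz0 by auto
  note dd = d[simplified]
  have h1: "\<bar>D2 (\<lambda>(x,y). E ([z,i]!x) ([{z},{z,a,b}]!y))\<bar> \<le> 1"
    by (rule M2) (use d in \<open>auto simp: okrows_def oksets_def\<close>)
  have e1: "D2 (\<lambda>(x,y). E ([z,i]!x) ([{z},{z,a,b}]!y)) = r i * (E z {z} - E z {z,a,b})"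
    using dd by (simp add: D2_def ri rz algebra_simps)
  have h2: "\<bar>D4 (\<lambda>(x,y). E ([z,i,a,b]!x) ([{z},{a},{b},{z,a,b}]!y))\<bar> \<le> 1"
    by (rule M4) (use d in \<open>auto simp: okrows_def oksets_def doubleton_eq_iff\<close>)
  have e2: "D4 (\<lambda>(x,y). E ([z,i,a,b]!x) ([{z},{a},{b},{z,a,b}]!y)) = - (r i * (E z {z} + E z {z,a,b}))"
    using dd by (simp add: D4_def ri rz algebra_simps)
  have h3: "\<bar>D2 (\<lambda>(x,y). E ([z,i]!x) ([{z,i},{z,i,a,b}]!y))\<bar> \<le> 1"
    by (rule M2) (use d in \<open>auto simp: okrows_def oksets_def doubleton_eq_iff\<close>)
  have e3: "D2 (\<lambda>(x,y). E ([z,i]!x) ([{z,i},{z,i,a,b}]!y)) = (r i - 1) * (E z {z,i} - E z {z,i,a,b})"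
    using dd by (simp add: D2_def ri rz algebra_simps)
  have h4: "\<bar>D4 (\<lambda>(x,y). E ([z,i,a,b]!x) ([{z,i},{i,a},{i,b},{z,i,a,b}]!y))\<bar> \<le> 1"
    by (rule M4) (use d in \<open>auto simp: okrows_def oksets_def doubleton_eq_iff\<close>)
  have e4: "D4 (\<lambda>(x,y). E ([z,i,a,b]!x) ([{z,i},{i,a},{i,b},{z,i,a,b}]!y)) = - ((r i - 1) * (E z {z,i} + E z {z,i,a,b}))"
    using dd by (simp add: D4_def ri rz algebra_simps)
  have s1: "E z {z} = 1 \<or> E z {z} = -1" using Vz1 d by auto
  have s2: "E z {z,a,b} = 1 \<or> E z {z,a,b} = -1" using Vz1 d by auto
  have s3: "E z {z,i} = 1 \<or> E z {z,i} = -1" using Vz1 d by auto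
  have s4: "E z {z,i,a,b} = 1 \<or> E z {z,i,a,b} = -1" using Vz1 d by auto
  have u: "\<bar>r i\<bar> \<le> 1/2"
    by (rule sgnL1[OF s1 s2]) (use h1 h2 e1 e2 in \<open>simp_all add: abs_minus_cancel\<close>)
  have l: "\<bar>r i - 1\<bar> \<le> 1/2"
    by (rule sgnL1[OF s3 s4]) (use h3 h4 e3 e4 in \<open>simp_all add: abs_minus_cancel\<close>)
  show ?thesis using u l by linarith
qed

lemma key2:
  fixes E :: "nat \<Rightarrow> nat set \<Rightarrow> real" and r :: "nat \<Rightarrow> real"
  assumes M2: "\<And>xs Ts. okrows xs 2 \<Longrightarrow> oksets Ts 2 \<Longrightarrow> \<bar>D2 (\<lambda>(a,b). E (xs!a) (Ts!b))\<bar> \<le> 1"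
    and M4: "\<And>xs Ts. okrows xs 4 \<Longrightarrow> oksets Ts 4 \<Longrightarrow> \<bar>D4 (\<lambda>(a,b). E (xs!a) (Ts!b))\<bar> \<le> 1"
    and Vz0: "\<And>z T. z \<in> {z1,z2} \<Longrightarrow> z \<notin> T \<Longrightarrow> E z T = 0"
    and Vz1: "\<And>z T. z \<in> {z1,z2} \<Longrightarrow> T \<subseteq> {..<4} \<Longrightarrow> z \<in> T \<Longrightarrow> E z T = 1 \<or> E z T = -1"
    and V: "\<And>x T. x \<in> {i,a} \<Longrightarrow> E x T = r x - (if x \<in> T then 1 else 0)"
    and d: "distinct [z1,z2,i,a]" "z1 < 4" "z2 < 4" "i < 4" "a < 4"
  shows "r i = 1/2"
proof -
  have ri: "E i T = r i - (if i \<in> T then 1 else 0)" "E a T = r a - (if a \<in> T then 1 else 0)"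
     for T using V by auto
  have rz: "z1 \<notin> T \<Longrightarrow> E z1 T = 0" "z2 \<notin> T \<Longrightarrow> E z2 T = 0" for T using Vz0 by auto
  note dd = d[simplified]
  have h1: "\<bar>D2 (\<lambda>(x,y). E ([z1,i]!x) ([{z1},{z1,z2,a}]!y))\<bar> \<le> 1"
    by (rule M2) (use d in \<open>auto simp: okrows_def oksets_def doubleton_eq_iff\<close>)
  have e1: "D2 (\<lambda>(x,y). E ([z1,i]!x) ([{z1},{z1,z2,a}]!y)) = r i * (E z1 {z1} - E z1 {z1,z2,a})"
    using dd by (simp add: D2_def ri rz algebra_simps)
  have h2: "\<bar>D2 (\<lambda>(x,y). E ([z2,i]!x) ([{z2},{z1,z2,a}]!y))\<bar> \<le> 1"
    by (rule M2) (use d in \<open>auto simp: okrows_def oksets_def doubleton_eq_iff\<close>)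
  have e2: "D2 (\<lambda>(x,y). E ([z2,i]!x) ([{z2},{z1,z2,a}]!y)) = r i * (E z2 {z2} - E z2 {z1,z2,a})"
    using dd by (simp add: D2_def ri rz algebra_simps)
  have h3: "\<bar>D4 (\<lambda>(x,y). E ([z1,z2,i,a]!x) ([{z1},{z2},{a},{z1,z2,a}]!y))\<bar> \<le> 1"
    by (rule M4) (use d in \<open>auto simp: okrows_def oksets_def doubleton_eq_iff\<close>)
  have e3: "D4 (\<lambda>(x,y). E ([z1,z2,i,a]!x) ([{z1},{z2},{a},{z1,z2,a}]!y))
      = - (r i * (E z2 {z1,z2,a} * E z1 {z1} + E z2 {z2} * E z1 {z1,z2,a}))"
    using dd by (simp add: D4_def ri rz algebra_simps)
  have g1: "\<bar>D2 (\<lambda>(x,y). E ([z1,i]!x) ([{z1,i},{z1,z2,i,a}]!y))\<bar> \<le> 1"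
    by (rule M2) (use d in \<open>auto simp: okrows_def oksets_def doubleton_eq_iff\<close>)
  have f1: "D2 (\<lambda>(x,y). E ([z1,i]!x) ([{z1,i},{z1,z2,i,a}]!y)) = (r i - 1) * (E z1 {z1,i} - E z1 {z1,z2,i,a})"
    using dd by (simp add: D2_def ri rz algebra_simps)
  have g2: "\<bar>D2 (\<lambda>(x,y). E ([z2,i]!x) ([{z2,i},{z1,z2,i,a}]!y))\<bar> \<le> 1"
    by (rule M2) (use d in \<open>auto simp: okrows_def oksets_def doubleton_eq_iff\<close>)
  have f2: "D2 (\<lambda>(x,y). E ([z2,i]!x) ([{z2,i},{z1,z2,i,a}]!y)) = (r i - 1) * (E z2 {z2,i} - E z2 {z1,z2,i,a})"
    using dd by (simp add: D2_def ri rz algebra_simps)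
  have g3: "\<bar>D4 (\<lambda>(x,y). E ([z1,z2,i,a]!x) ([{z1,i},{z2,i},{i,a},{z1,z2,i,a}]!y))\<bar> \<le> 1"
    by (rule M4) (use d in \<open>auto simp: okrows_def oksets_def doubleton_eq_iff\<close>)
  have f3: "D4 (\<lambda>(x,y). E ([z1,z2,i,a]!x) ([{z1,i},{z2,i},{i,a},{z1,z2,i,a}]!y))
      = - ((r i - 1) * (E z2 {z1,z2,i,a} * E z1 {z1,i} + E z2 {z2,i} * E z1 {z1,z2,i,a}))"
    using dd by (simp add: D4_def ri rz algebra_simps)
  have s1: "E z1 {z1} = 1 \<or> E z1 {z1} = -1" using Vz1 d by auto
  have s2: "E z1 {z1,z2,a} = 1 \<or> E z1 {z1,z2,a} = -1" using Vz1 d by auto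
  have s3: "E z2 {z2} = 1 \<or> E z2 {z2} = -1" using Vz1 d by auto
  have s4: "E z2 {z1,z2,a} = 1 \<or> E z2 {z1,z2,a} = -1" using Vz1 d by auto
  have t1: "E z1 {z1,i} = 1 \<or> E z1 {z1,i} = -1" using Vz1 d by auto
  have t2: "E z1 {z1,z2,i,a} = 1 \<or> E z1 {z1,z2,i,a} = -1" using Vz1 d by auto
  have t3: "E z2 {z2,i} = 1 \<or> E z2 {z2,i} = -1" using Vz1 d by auto
  have t4: "E z2 {z1,z2,i,a} = 1 \<or> E z2 {z1,z2,i,a} = -1" using Vz1 d by auto
  have u: "\<bar>r i\<bar> \<le> 1/2"
    by (rule sgnL2[OF s1 s2 s3 s4]) (use h1 h2 h3 e1 e2 e3 in \<open>simp_all add: abs_minus_cancel\<close>)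
  have l: "\<bar>r i - 1\<bar> \<le> 1/2"
    by (rule sgnL2[OF t1 t2 t3 t4]) (use g1 g2 g3 f1 f2 f3 in \<open>simp_all add: abs_minus_cancel\<close>)
  show ?thesis using u l by linarith
qed

lemma key3:
  fixes E :: "nat \<Rightarrow> nat set \<Rightarrow> real"
  assumes M2: "\<And>xs Ts. okrows xs 2 \<Longrightarrow> oksets Ts 2 \<Longrightarrow> \<bar>D2 (\<lambda>(a,b). E (xs!a) (Ts!b))\<bar> \<le> 1"
    and M3: "\<And>xs Ts. okrows xs 3 \<Longrightarrow> oksets Ts 3 \<Longrightarrow> \<bar>D3 (\<lambda>(a,b). E (xs!a) (Ts!b))\<bar> \<le> 1"
    and Vz0: "\<And>z T. z \<in> {x,y,w} \<Longrightarrow> z \<notin> T \<Longrightarrow> E z T = 0"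
    and Vz1: "\<And>z T. z \<in> {x,y,w} \<Longrightarrow> T \<subseteq> {..<4} \<Longrightarrow> z \<in> T \<Longrightarrow> E z T = 1 \<or> E z T = -1"
    and d: "distinct [x,y,w]" "x < 4" "y < 4" "w < 4"
  shows False
proof -
  have rz: "x \<notin> T \<Longrightarrow> E x T = 0" "y \<notin> T \<Longrightarrow> E y T = 0" "w \<notin> T \<Longrightarrow> E w T = 0" for T using Vz0 by auto
  note dd = d[simplified]
  define A where "A = E x {x,y}"
  define B where "B = E y {x,y}"
  define C where "C = E y {y,w}"
  define D where "D = E w {y,w}"
  define F where "F = E x {x,w}"
  define G where "G = E w {x,w}"
  define X where "X = E x {x,y,w}"
  define Y where "Y = E y {x,y,w}"
  define W where "W = E w {x,y,w}"
  have h1: "\<bar>D2 (\<lambda>(a,b). E ([x,y]!a) ([{x,y},{x,y,w}]!b))\<bar> \<le> 1"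
    by (rule M2) (use d in \<open>auto simp: okrows_def oksets_def doubleton_eq_iff\<close>)
  have e1: "D2 (\<lambda>(a,b). E ([x,y]!a) ([{x,y},{x,y,w}]!b)) = A * Y - X * B"
    using dd by (simp add: D2_def A_def Y_def X_def B_def)
  have h2: "\<bar>D2 (\<lambda>(a,b). E ([x,w]!a) ([{x,w},{x,y,w}]!b))\<bar> \<le> 1"
    by (rule M2) (use d in \<open>auto simp: okrows_def oksets_def doubleton_eq_iff\<close>)
  have e2: "D2 (\<lambda>(a,b). E ([x,w]!a) ([{x,w},{x,y,w}]!b)) = F * W - X * G"
    using dd by (simp add: D2_def F_def W_def X_def G_def)
  have h3: "\<bar>D2 (\<lambda>(a,b). E ([y,w]!a) ([{y,w},{x,y,w}]!b))\<bar> \<le> 1"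
    by (rule M2) (use d in \<open>auto simp: okrows_def oksets_def doubleton_eq_iff\<close>)
  have e3: "D2 (\<lambda>(a,b). E ([y,w]!a) ([{y,w},{x,y,w}]!b)) = C * W - Y * D"
    using dd by (simp add: D2_def C_def W_def Y_def D_def)
  have h4: "\<bar>D3 (\<lambda>(a,b). E ([x,y,w]!a) ([{x,y},{y,w},{x,w}]!b))\<bar> \<le> 1"
    by (rule M3) (use d in \<open>auto simp: okrows_def oksets_def doubleton_eq_iff\<close>)
  have e4: "D3 (\<lambda>(a,b). E ([x,y,w]!a) ([{x,y},{y,w},{x,w}]!b)) = G * A * C + D * F * B"
    using dd by (simp add: D3_def A_def B_def C_def D_def F_def G_def rz algebra_simps)
  have sA: "A = 1 \<or> A = -1" unfolding A_def using Vz1 d by auto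
  have sB: "B = 1 \<or> B = -1" unfolding B_def using Vz1 d by auto
  have sC: "C = 1 \<or> C = -1" unfolding C_def using Vz1 d by auto
  have sD: "D = 1 \<or> D = -1" unfolding D_def using Vz1 d by auto
  have sF: "F = 1 \<or> F = -1" unfolding F_def using Vz1 d by auto
  have sG: "G = 1 \<or> G = -1" unfolding G_def using Vz1 d by auto
  have sX: "X = 1 \<or> X = -1" unfolding X_def using Vz1 d by auto
  have sY: "Y = 1 \<or> Y = -1" unfolding Y_def using Vz1 d by auto
  have sW: "W = 1 \<or> W = -1" unfolding W_def using Vz1 d by auto
  have q1: "A * Y = X * B" by (rule sgn_eq[OF sgn_mult[OF sA sY] sgn_mult[OF sX sB]]) (use h1 e1 in simp)
  have q2: "F * W = X * G" by (rule sgn_eq[OF sgn_mult[OF sF sW] sgn_mult[OF sX sG]]) (use h2 e2 in simp)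
  have q3: "C * W = Y * D" by (rule sgn_eq[OF sgn_mult[OF sC sW] sgn_mult[OF sY sD]]) (use h3 e3 in simp)
  have sq: "X * X = 1" "Y * Y = 1" "W * W = 1" using sX sY sW by auto
  have "(G * A * C) * (X * Y * W) = (X * G) * (A * Y) * (C * W)" by (simp add: algebra_simps)
  also have "\<dots> = (F * W) * (X * B) * (Y * D)" by (simp only: q1 q2 q3)
  also have "\<dots> = (D * F * B) * (X * Y * W)" by (simp add: algebra_simps)
  finally have "(G * A * C) * (X * Y * W) = (D * F * B) * (X * Y * W)" .
  moreover have "X * Y * W \<noteq> 0" using sX sY sW by auto
  ultimately have eq: "G * A * C = D * F * B" by simp
  have sv: "D * F * B = 1 \<or> D * F * B = -1" using sgn_mult[OF sgn_mult[OF sD sF] sB] .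
  have k: "\<bar>G * A * C + D * F * B\<bar> \<le> 1" using h4 unfolding e4 .
  show False by (rule sgn_double[OF eq sv k])
qed


definition colS :: "real mat \<Rightarrow> nat set \<Rightarrow> nat" where
  "colS S T = (THE j. j < 2^4 \<and> col_support S j = T \<inter> {..<4})"

definition EE :: "real vec \<Rightarrow> real mat \<Rightarrow> nat \<Rightarrow> nat set \<Rightarrow> real" where
  "EE r S x T = translate r S $$ (x, colS S T)"

lemma sauer_parts:
  assumes "sauer_matrix 4 S"
  shows "S \<in> carrier_mat 4 16" "\<forall>i<4. \<forall>j<16. S $$ (i, j) \<in> {-1, 0, 1}"
    "\<forall>T. T \<subseteq> {..<4} \<longrightarrow> (\<exists>!j. j < 16 \<and> col_support S j = T)"
proof -
  have p16: "(2::nat)^4 = 16" by simp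
  have c: "S \<in> carrier_mat 4 16 \<and> (\<forall>i<4. \<forall>j<16. S $$ (i, j) \<in> {-1, 0, 1}) \<and>
     (\<forall>T. T \<subseteq> {..<4} \<longrightarrow> (\<exists>!j. j < 16 \<and> col_support S j = T))"
    using assms[unfolded sauer_matrix_def p16] .
  from c show "S \<in> carrier_mat 4 16" by (rule conjunct1)
  from c show "\<forall>i<4. \<forall>j<16. S $$ (i, j) \<in> {-1, 0, 1}" by (rule conjunct1[OF conjunct2])
  from c show "\<forall>T. T \<subseteq> {..<4} \<longrightarrow> (\<exists>!j. j < 16 \<and> col_support S j = T)"
    by (rule conjunct2[OF conjunct2])
qed

lemma colS_prop:
  assumes "sauer_matrix 4 S"
  shows "colS S T < 16 \<and> col_support S (colS S T) = T \<inter> {..<4}"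
proof -
  have p16: "(2::nat)^4 = 16" by simp
  have ex: "\<exists>!j. j < 16 \<and> col_support S j = T \<inter> {..<4}"
    using sauer_parts(3)[OF assms, rule_format, of "T \<inter> {..<4}"] by simp
  show ?thesis unfolding colS_def p16 by (rule theI'[OF ex])
qed

lemma colS_inj:
  assumes "sauer_matrix 4 S" "T \<subseteq> {..<4}" "T' \<subseteq> {..<4}" "colS S T = colS S T'"
  shows "T = T'"
proof -
  have "T \<inter> {..<4} = T' \<inter> {..<4}"
    using colS_prop[OF assms(1), of T] colS_prop[OF assms(1), of T'] assms(4) by simp
  then show ?thesis using assms(2,3) by (simp add: Int_absorb2)
qed

lemma S_entry_nz:
  assumes "sauer_matrix 4 S" "x < 4"
  shows "S $$ (x, colS S T) \<noteq> 0 \<longleftrightarrow> x \<in> T"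
proof -
  have dS: "dim_row S = 4" using sauer_parts(1)[OF assms(1)] by simp
  have "col_support S (colS S T) = T \<inter> {..<4}" using colS_prop[OF assms(1)] by simp
  then have "x \<in> col_support S (colS S T) \<longleftrightarrow> x \<in> T" using assms(2) by simp
  then show ?thesis using assms(2) dS unfolding col_support_def by simp
qed

lemma S_entry_vals:
  assumes "sauer_matrix 4 S" "x < 4" "j < 16"
  shows "S $$ (x, j) \<in> {-1, 0, 1}"
  using sauer_parts(2)[OF assms(1)] assms(2,3) by simp

lemma R_basic:
  assumes "sauer_matrix 4 S" "feasible r S"
  shows "dim_row (translate r S) = 4" "dim_col (translate r S) = 16"
    "\<And>x j. x < 4 \<Longrightarrow> j < 16 \<Longrightarrow> translate r S $$ (x,j) = r $ x + S $$ (x,j)"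
    "totally_1_submodular (translate r S)" "dim_vec r = 4"
    "\<And>x. x < 4 \<Longrightarrow> 0 \<le> r $ x \<and> r $ x < 1"
proof -
  have S: "S \<in> carrier_mat 4 16" using sauer_parts(1)[OF assms(1)] .
  then show "dim_row (translate r S) = 4" "dim_col (translate r S) = 16"
    "\<And>x j. x < 4 \<Longrightarrow> j < 16 \<Longrightarrow> translate r S $$ (x,j) = r $ x + S $$ (x,j)"
    by (auto simp: translate_def)
  show "totally_1_submodular (translate r S)" using assms(2) unfolding feasible_def by simp
  show "dim_vec r = 4" using assms(2) S unfolding feasible_def by simp
  then show "\<And>x. x < 4 \<Longrightarrow> 0 \<le> r $ x \<and> r $ x < 1" using assms(2) unfolding feasible_def by simp
qed

lemma mat_det_D2: "det (mat 2 2 f) = D2 f" unfolding D2_def by (rule det2)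
lemma mat_det_D3: "det (mat 3 3 f) = D3 f" unfolding D3_def by (rule det3)
lemma mat_det_D4: "det (mat 4 4 f) = D4 f" unfolding D4_def by (rule det4)

lemma minor_EE:
  assumes "sauer_matrix 4 S" "feasible r S" "okrows xs k" "oksets Ts k" "k > 0"
  shows "\<bar>det (mat k k (\<lambda>(a,b). EE r S (xs!a) (Ts!b)))\<bar> \<le> 1"
proof -
  note RB = R_basic[OF assms(1,2)]
  have lt: "length Ts = k" using assms(4) by (simp add: oksets_def)
  have eq: "mat k k (\<lambda>(a,b). EE r S (xs!a) (Ts!b)) = mat k k (\<lambda>(a,b). translate r S $$ (xs!a, map (colS S) Ts ! b))"
    by (rule eq_matI) (auto simp: EE_def lt)
  have inj: "inj_on (colS S) (set Ts)"
    by (rule inj_onI) (use colS_inj[OF assms(1)] assms(4) in \<open>auto simp: oksets_def\<close>)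
  have dj: "distinct (map (colS S) Ts)" using inj assms(4) by (simp add: oksets_def distinct_map)
  have sj: "set (map (colS S) Ts) \<subseteq> {..<dim_col (translate r S)}"
    using colS_prop[OF assms(1)] RB(2) by auto
  show ?thesis unfolding eq
    by (rule minor_bound[OF RB(4)]) (use assms(3) RB(1) dj sj lt assms(5) in \<open>auto simp: okrows_def\<close>)
qed

lemma common_M:
  assumes "sauer_matrix 4 S" "feasible r S"
  shows "\<And>xs Ts. okrows xs 2 \<Longrightarrow> oksets Ts 2 \<Longrightarrow> \<bar>D2 (\<lambda>(a,b). EE r S (xs!a) (Ts!b))\<bar> \<le> 1"
    "\<And>xs Ts. okrows xs 3 \<Longrightarrow> oksets Ts 3 \<Longrightarrow> \<bar>D3 (\<lambda>(a,b). EE r S (xs!a) (Ts!b))\<bar> \<le> 1"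
    "\<And>xs Ts. okrows xs 4 \<Longrightarrow> oksets Ts 4 \<Longrightarrow> \<bar>D4 (\<lambda>(a,b). EE r S (xs!a) (Ts!b))\<bar> \<le> 1"
  using minor_EE[OF assms, of _ 2] minor_EE[OF assms, of _ 3] minor_EE[OF assms, of _ 4]
  by (auto simp: mat_det_D2 mat_det_D3 mat_det_D4)

lemma row_one_zero:
  assumes "sauer_matrix 4 S" "feasible r S" "x < 4" "\<exists>j<16. S $$ (x,j) = 1"
  shows "r $ x = 0"
proof -
  note RB = R_basic[OF assms(1,2)]
  obtain j where j: "j < 16" "S $$ (x,j) = 1" using assms(4) by blast
  have "\<bar>det (mat 1 1 (\<lambda>(a,b). translate r S $$ ([x]!a, [j]!b)))\<bar> \<le> 1"
    by (rule minor_bound[OF RB(4)]) (use assms(3) j RB(1,2) in auto)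
  then have "\<bar>r $ x + 1\<bar> \<le> 1" using RB(3)[OF assms(3) j(1)] j by (simp add: det_mat_1 det_mat_1[unfolded One_nat_def])
  then show ?thesis using RB(6)[OF assms(3)] by simp
qed

lemma EE_out:
  assumes "sauer_matrix 4 S" "feasible r S" "x < 4" "x \<notin> T"
  shows "EE r S x T = r $ x"
proof -
  note RB = R_basic[OF assms(1,2)]
  have "S $$ (x, colS S T) = 0" using S_entry_nz[OF assms(1,3), of T] assms(4) by simp
  then show ?thesis using RB(3)[OF assms(3)] colS_prop[OF assms(1), of T] by (simp add: EE_def)
qed

lemma EE_one_row:
  assumes "sauer_matrix 4 S" "feasible r S" "x < 4" "\<exists>j<16. S $$ (x,j) = 1" "x \<in> T"
  shows "EE r S x T = 1 \<or> EE r S x T = -1"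
proof -
  note RB = R_basic[OF assms(1,2)]
  have nz: "S $$ (x, colS S T) \<noteq> 0" using S_entry_nz[OF assms(1,3), of T] assms(5) by simp
  have c: "colS S T < 16" using colS_prop[OF assms(1)] by auto
  have "S $$ (x, colS S T) \<in> {-1,0,1}" using S_entry_vals[OF assms(1,3) c] .
  then show ?thesis using nz RB(3)[OF assms(3) c] row_one_zero[OF assms(1-4)] by (auto simp: EE_def)
qed

lemma EE_free_row:
  assumes "sauer_matrix 4 S" "feasible r S" "x < 4" "\<forall>j<16. S $$ (x,j) \<noteq> 1"
  shows "EE r S x T = r $ x - (if x \<in> T then 1 else 0)"
proof (cases "x \<in> T")
  case True
  note RB = R_basic[OF assms(1,2)]
  have nz: "S $$ (x, colS S T) \<noteq> 0" using S_entry_nz[OF assms(1,3), of T] True by simp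
  have c: "colS S T < 16" using colS_prop[OF assms(1)] by auto
  have "S $$ (x, colS S T) \<in> {-1,0,1}" using S_entry_vals[OF assms(1,3) c] .
  then have "S $$ (x, colS S T) = -1" using nz assms(4) c by auto
  then show ?thesis using True RB(3)[OF assms(3) c] by (simp add: EE_def)
next
  case False
  then show ?thesis using EE_out[OF assms(1-3) False] by simp
qed

lemma type_facts:
  assumes "sauer_matrix 4 S" "of_type S s"
  shows "s \<le> 4" "\<And>x. x < s \<Longrightarrow> \<exists>j<16. S $$ (x,j) = 1"
    "\<And>x. s \<le> x \<Longrightarrow> x < 4 \<Longrightarrow> \<forall>j<16. S $$ (x,j) \<noteq> 1"
proof -
  have S: "S \<in> carrier_mat 4 16" using sauer_parts(1)[OF assms(1)] .
  then show "s \<le> 4" "\<And>x. x < s \<Longrightarrow> \<exists>j<16. S $$ (x,j) = 1"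
    "\<And>x. s \<le> x \<Longrightarrow> x < 4 \<Longrightarrow> \<forall>j<16. S $$ (x,j) \<noteq> 1"
    using assms(2) unfolding of_type_def by auto
qed

lemma vec4_eq:
  assumes "dim_vec r = 4" "r $ 0 = a" "r $ 1 = b" "r $ 2 = c" "r $ 3 = d"
  shows "r = vec_of_list [a, b, c, d]"
proof (rule eq_vecI)
  show "dim_vec r = dim_vec (vec_of_list [a, b, c, d])" using assms(1) by simp
  fix i assume "i < dim_vec (vec_of_list [a, b, c, d])"
  then have "i < 4" by simp
  then have "i = 0 \<or> i = 1 \<or> i = 2 \<or> i = 3" by auto
  then show "r $ i = vec_of_list [a, b, c, d] $ i"
    using assms by (auto simp del: vec_of_list_Cons simp add: vec_of_list_index)
qed

lemma part0:
  assumes A: "sauer_matrix 4 S" "feasible r S" and t: "of_type S 0"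
  shows "r = vec_of_list [1/2, 1/2, 1/2, 1/2]"
proof -
  note M = common_M[OF A]
  have free: "\<And>x. x < 4 \<Longrightarrow> \<forall>j<16. S $$ (x,j) \<noteq> 1" using type_facts(3)[OF A(1) t] by auto
  have V: "\<And>x T. x < 4 \<Longrightarrow> EE r S x T = r $ x - (if x \<in> T then 1 else 0)"
    using EE_free_row[OF A] free by blast
  have k: "\<And>i a b c. distinct [i,a,b,c] \<Longrightarrow> i < 4 \<Longrightarrow> a < 4 \<Longrightarrow> b < 4 \<Longrightarrow> c < 4 \<Longrightarrow> r $ i = 1/2"
  proof -
    fix i a b c :: nat assume d: "distinct [i,a,b,c]" "i < 4" "a < 4" "b < 4" "c < 4"
    show "r $ i = 1/2"
      by (rule key0[where E="EE r S" and r="\<lambda>x. r $ x", OF M(3) _ d]) (use V d in auto)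
  qed
  show ?thesis
    by (rule vec4_eq) (use R_basic(5)[OF A] k[of 0 1 2 3] k[of 1 0 2 3] k[of 2 0 1 3] k[of 3 0 1 2] in auto)
qed

lemma part1:
  assumes A: "sauer_matrix 4 S" "feasible r S" and t: "of_type S 1"
  shows "r = vec_of_list [0, 1/2, 1/2, 1/2]"
proof -
  note M = common_M[OF A]
  have one: "\<exists>j<16. S $$ (0,j) = 1" using type_facts(2)[OF A(1) t] by auto
  have free: "\<And>x. 1 \<le> x \<Longrightarrow> x < 4 \<Longrightarrow> \<forall>j<16. S $$ (x,j) \<noteq> 1" using type_facts(3)[OF A(1) t] by auto
  have r0: "r $ 0 = 0" using row_one_zero[OF A _ one] by simp
  have V: "\<And>x T. 1 \<le> x \<Longrightarrow> x < 4 \<Longrightarrow> EE r S x T = r $ x - (if x \<in> T then 1 else 0)"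
    using EE_free_row[OF A] free by blast
  have Vz0: "\<And>T. 0 \<notin> T \<Longrightarrow> EE r S 0 T = 0" using EE_out[OF A, of 0] r0 by simp
  have Vz1: "\<And>T. T \<subseteq> {..<4} \<Longrightarrow> 0 \<in> T \<Longrightarrow> EE r S 0 T = 1 \<or> EE r S 0 T = -1"
    using EE_one_row[OF A _ one] by simp
  have k: "\<And>i a b. distinct [0,i,a,b] \<Longrightarrow> i < 4 \<Longrightarrow> a < 4 \<Longrightarrow> b < 4 \<Longrightarrow> r $ i = 1/2"
  proof -
    fix i a b :: nat assume d: "distinct [0,i,a,b]" "i < 4" "a < 4" "b < 4"
    show "r $ i = 1/2"
      by (rule key1[where E="EE r S" and r="\<lambda>x. r $ x", OF M(1) M(3) Vz0 Vz1 _ d(1) _ d(2-4)])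
        (use V d in auto)
  qed
  show ?thesis
    by (rule vec4_eq) (use R_basic(5)[OF A] r0 k[of 1 2 3] k[of 2 1 3] k[of 3 1 2] in auto)
qed

lemma part2:
  assumes A: "sauer_matrix 4 S" "feasible r S" and t: "of_type S 2"
  shows "r = vec_of_list [0, 0, 1/2, 1/2]"
proof -
  note M = common_M[OF A]
  have one: "\<And>x. x < 2 \<Longrightarrow> \<exists>j<16. S $$ (x,j) = 1" using type_facts(2)[OF A(1) t] by auto
  have free: "\<And>x. 2 \<le> x \<Longrightarrow> x < 4 \<Longrightarrow> \<forall>j<16. S $$ (x,j) \<noteq> 1" using type_facts(3)[OF A(1) t] by auto
  have r0: "\<And>x. x < 2 \<Longrightarrow> r $ x = 0" using row_one_zero[OF A _ one] by simp
  have V: "\<And>x T. 2 \<le> x \<Longrightarrow> x < 4 \<Longrightarrow> EE r S x T = r $ x - (if x \<in> T then 1 else 0)"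
    using EE_free_row[OF A] free by blast
  have Vz0: "\<And>z T. z \<in> {0,1} \<Longrightarrow> z \<notin> T \<Longrightarrow> EE r S z T = 0" using EE_out[OF A] r0 by auto
  have Vz1: "\<And>z T. z \<in> {0,1} \<Longrightarrow> T \<subseteq> {..<4} \<Longrightarrow> z \<in> T \<Longrightarrow> EE r S z T = 1 \<or> EE r S z T = -1"
  proof -
    fix z :: nat and T :: "nat set" assume z: "z \<in> {0,1}" and sT: "T \<subseteq> {..<4}" and zT: "z \<in> T"
    then have z2: "z < 2" by auto
    show "EE r S z T = 1 \<or> EE r S z T = -1" by (rule EE_one_row[OF A _ one[OF z2] zT]) (use z2 in simp)
  qed
  have k: "\<And>i a. distinct [0,1,i,a] \<Longrightarrow> i < 4 \<Longrightarrow> a < 4 \<Longrightarrow> r $ i = 1/2"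
  proof -
    fix i a :: nat assume d: "distinct [0,1,i,a]" "i < 4" "a < 4"
    show "r $ i = 1/2"
      by (rule key2[where E="EE r S" and r="\<lambda>x. r $ x", OF M(1) M(3) Vz0 Vz1 _ d(1) _ _ d(2-3)])
        (use V d in auto)
  qed
  show ?thesis
    by (rule vec4_eq) (use R_basic(5)[OF A] r0 k[of 2 3] k[of 3 2] in auto)
qed

lemma part34:
  assumes A: "sauer_matrix 4 S" and t: "of_type S 3 \<or> of_type S 4"
  shows "\<not> feasible_for_translations S"
proof
  assume "feasible_for_translations S"
  then obtain r where F: "feasible r S" unfolding feasible_for_translations_def by blast
  have one: "\<And>x. x < 3 \<Longrightarrow> \<exists>j<16. S $$ (x,j) = 1" using type_facts(2)[OF A] t by fastforce
  note M = common_M[OF A F]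
  have r0: "\<And>x. x < 3 \<Longrightarrow> r $ x = 0" using row_one_zero[OF A F _ one] by simp
  have Vz0: "\<And>z T. z \<in> {0,1,2} \<Longrightarrow> z \<notin> T \<Longrightarrow> EE r S z T = 0" using EE_out[OF A F] r0 by auto
  have Vz1: "\<And>z T. z \<in> {0,1,2} \<Longrightarrow> T \<subseteq> {..<4} \<Longrightarrow> z \<in> T \<Longrightarrow> EE r S z T = 1 \<or> EE r S z T = -1"
  proof -
    fix z :: nat and T :: "nat set" assume z: "z \<in> {0,1,2}" and sT: "T \<subseteq> {..<4}" and zT: "z \<in> T"
    then have z2: "z < 3" by auto
    show "EE r S z T = 1 \<or> EE r S z T = -1" by (rule EE_one_row[OF A F _ one[OF z2] zT]) (use z2 in simp)
  qed
  show False
    by (rule key3[where E="EE r S", OF M(1) M(2) Vz0 Vz1]) auto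
qed

theorem proposition3p5:
  fixes S :: "real mat" and r :: "real vec"
  assumes "sauer_matrix 4 S" and "feasible r S"
  shows "(of_type S 0 \<longrightarrow> r = vec_of_list [1/2, 1/2, 1/2, 1/2]) \<and>
         (of_type S 1 \<longrightarrow> r = vec_of_list [0, 1/2, 1/2, 1/2]) \<and>
         (of_type S 2 \<longrightarrow> r = vec_of_list [0, 0, 1/2, 1/2]) \<and>
         (of_type S 3 \<or> of_type S 4 \<longrightarrow> \<not> feasible_for_translations S)"
  using part0[OF assms] part1[OF assms] part2[OF assms] part34[OF assms(1)] by blast

end
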